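(* Let $r>1$, let $V:\mathbb{R}\to\mathbb{R}$ be convex and $L$-Lipschitz with $V'$ also $L$-Lipschitz, such that $m:=e^{-V}$ is a probability density, and let $\rho=e^{-(r+1)V}$. Let $0<c<C$ and $f\in\mathcal{P}_{c,C}$. Then there exists $\lambda\ge0$ depending only on $c$, $C$ and $V$ such that the $W_2$-Hessian of $\mathcal{F}_\rho[g]=\int\rho\, g^{-r}\,dx$ at $f$ is bounded below by $-\lambda$, i.e. for every smooth compactly supported test function $\phi$, $$2(r+1)\int\frac{\rho'}{f^r}\phi'\phi''\,dx+r(r+1)\int\frac{\rho}{f^r}(\phi'')^2\,dx+\int\frac{\rho''}{f^r}(\phi')^2\,dx\ \ge\ -\lambda\int(\phi')^2 f\,dx.$$
   Context: $\mathcal{P}_{c,C}:=\{g\in\mathcal{P}(\mathbb{R}):\ c\,m\le g\le C\,m\}$. *)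

theory Defs
  imports "HOL-Analysis.Analysis"
begin

definition test_fun :: "(real \<Rightarrow> real) \<Rightarrow> bool" where
  "test_fun \<phi> \<longleftrightarrow> (\<forall>n. \<forall>x. ((deriv ^^ n) \<phi>) differentiable (at x))
      \<and> (\<exists>R. \<forall>x. \<bar>x\<bar> > R \<longrightarrow> \<phi> x = 0)"

definition P_cC :: "real \<Rightarrow> real \<Rightarrow> (real \<Rightarrow> real) \<Rightarrow> (real \<Rightarrow> real) set" where
  "P_cC c C m = {g. g \<in> borel_measurable lebesgue
      \<and> (\<integral>\<^sup>+x. ennreal (g x) \<partial>lebesgue) = 1
      \<and> (AE x in lebesgue. c * m x \<le> g x \<and> g x \<le> C * m x)}"

end

theory Submission
  imports Defs
begin

lemma lip_deriv_bound:
  fixes g :: "real \<Rightarrow> real"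
  assumes "L-lipschitz_on UNIV g" "(g has_real_derivative D) (at x)"
  shows "\<bar>D\<bar> \<le> L"
proof -
  have "((\<lambda>h. (g (x + h) - g x) / h) \<longlongrightarrow> D) (at 0)" using assms(2) by (simp add: DERIV_def)
  moreover have "eventually (\<lambda>h. norm ((g (x + h) - g x) / h) \<le> L) (at (0::real))"
  proof (rule always_eventually, rule allI)
    fix h :: real
    have "dist (g (x+h)) (g x) \<le> L * dist (x+h) x" using lipschitz_onD[OF assms(1)] by blast
    then show "norm ((g (x + h) - g x) / h) \<le> L"
      using lipschitz_on_nonneg[OF assms(1)] by (cases "h = 0") (auto simp: dist_real_def norm_divide divide_le_eq)
  qed
  ultimately show ?thesis using Lim_norm_ubound[of "at (0::real)"] by fastforce
qed

lemma rho1_eq: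
  fixes r :: real and V V' rho1 :: "real \<Rightarrow> real"
  assumes dV: "\<And>x. (V has_real_derivative V' x) (at x)"
    and d1: "\<And>x. ((\<lambda>y. exp (- (r + 1) * V y)) has_real_derivative rho1 x) (at x)"
  shows "rho1 x = -(r+1) * V' x * exp(-(r+1)*V x)"
proof -
  have "((\<lambda>y. exp (- (r + 1) * V y)) has_real_derivative exp (- (r + 1) * V x) * (- (r + 1) * V' x)) (at x)"
    by (rule derivative_eq_intros dV refl | simp)+
  from DERIV_unique[OF d1 this] show ?thesis by simp
qed

lemma rho2_bound:
  fixes r L :: real and V V' rho1 :: "real \<Rightarrow> real"
  assumes r: "r > 1" and lipV: "L-lipschitz_on UNIV V" and dV: "\<And>x. (V has_real_derivative V' x) (at x)"
    and lipV': "L-lipschitz_on UNIV V'"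
    and d1: "\<And>x. ((\<lambda>y. exp (- (r + 1) * V y)) has_real_derivative rho1 x) (at x)"
    and d2: "(rho1 has_real_derivative d) (at x)"
  shows "\<bar>d\<bar> \<le> (r+1)*(L + (r+1)*L^2) * exp(-(r+1)*V x)"
proof -
  define E where "E y = exp (- (r + 1) * V y)" for y
  have dE: "(E has_real_derivative E y * (- (r + 1) * V' y)) (at y)" for y
    unfolding E_def by (rule derivative_eq_intros dV refl | simp)+
  have Epos: "E y > 0" for y unfolding E_def by simp
  have r1: "rho1 y = -(r+1) * V' y * E y" for y unfolding E_def using rho1_eq[OF dV d1] .
  have Veq: "V' = (\<lambda>y. rho1 y / (-(r+1) * E y))"
    using r1 Epos r by (auto simp: fun_eq_iff) (metis less_irrefl)
  have "((\<lambda>y. rho1 y / (-(r+1) * E y)) has_real_derivative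
      (d * (-(r+1) * E x) - rho1 x * (-(r+1) * (E x * (- (r + 1) * V' x)))) / ((-(r+1) * E x) * (-(r+1) * E x))) (at x)"
    using Epos[of x] r by (intro DERIV_divide d2 DERIV_cmult dE) auto
  then obtain W where W: "(V' has_real_derivative W) (at x)" using Veq by auto
  have Wb: "\<bar>W\<bar> \<le> L" using lip_deriv_bound[OF lipV' W] .
  have Vb: "\<bar>V' x\<bar> \<le> L" using lip_deriv_bound[OF lipV dV] .
  have "((\<lambda>y. -(r+1) * V' y * E y) has_real_derivative (-(r+1) * W) * E x + (E x * (- (r + 1) * V' x)) * (-(r+1) * V' x)) (at x)"
    by (intro DERIV_mult DERIV_cmult W dE)
  moreover have "rho1 = (\<lambda>y. -(r+1) * V' y * E y)" using r1 by auto
  ultimately have deq: "d = (-(r+1) * W) * E x + (E x * (- (r + 1) * V' x)) * (-(r+1) * V' x)"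
    using DERIV_unique d2 by metis
  have "\<bar>d\<bar> \<le> \<bar>(-(r+1) * W) * E x\<bar> + \<bar>(E x * (- (r + 1) * V' x)) * (-(r+1) * V' x)\<bar>"
    unfolding deq by (rule abs_triangle_ineq)
  also have "\<dots> = (r+1) * \<bar>W\<bar> * E x + (r+1) * (r+1) * \<bar>V' x\<bar>^2 * E x"
  proof -
    have a: "\<bar>-(r+1)\<bar> = r+1" using r by simp
    have b: "\<bar>E x\<bar> = E x" using Epos[of x] by simp
    show ?thesis by (simp only: abs_mult a b) (simp add: power2_eq_square mult_ac)
  qed
  also have "\<dots> \<le> (r+1) * L * E x + (r+1) * (r+1) * L^2 * E x"
  proof -
    have "\<bar>V' x\<bar>^2 \<le> L^2" using Vb by (intro power_mono) auto
    then show ?thesis using Wb r Epos[of x] by (intro add_mono mult_right_mono mult_left_mono) auto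
  qed
  finally show ?thesis unfolding E_def by (simp add: algebra_simps power2_eq_square)
qed

lemma cont_meas: "continuous_on UNIV (g::real\<Rightarrow>real) \<Longrightarrow> g \<in> borel_measurable lebesgue"
  by (simp add: borel_measurable_continuous_onI measurable_completion)

lemma deriv_meas:
  fixes rho1 rho2 :: "real \<Rightarrow> real"
  assumes c1: "continuous_on UNIV rho1" and ae: "AE x in lebesgue. (rho1 has_real_derivative rho2 x) (at x)"
  shows "rho2 \<in> borel_measurable lebesgue"
proof -
  define D where "D i x = (rho1 (x + inverse (real (Suc i))) - rho1 x) / inverse (real (Suc i))" for i x
  have "D i \<in> borel_measurable lebesgue" for i
    unfolding D_def by (intro cont_meas continuous_intros continuous_on_compose2[OF c1]) auto
  then have m: "(\<lambda>x. lim (\<lambda>i. D i x)) \<in> borel_measurable lebesgue" by (rule borel_measurable_lim_metric)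
  have h: "filterlim (\<lambda>i. inverse (real (Suc i))) (at (0::real)) sequentially"
    unfolding filterlim_at by (intro conjI LIMSEQ_inverse_real_of_nat) auto
  have "AE x in lebesgue. lim (\<lambda>i. D i x) = rho2 x"
    using ae
  proof (rule AE_mp, intro AE_I2 impI)
    fix x assume "(rho1 has_real_derivative rho2 x) (at x)"
    then have "((\<lambda>h. (rho1 (x + h) - rho1 x) / h) \<longlongrightarrow> rho2 x) (at 0)" by (simp add: DERIV_def)
    from filterlim_compose[OF this h] have "(\<lambda>i. D i x) \<longlonglongrightarrow> rho2 x" unfolding D_def by (simp add: o_def)
    then show "lim (\<lambda>i. D i x) = rho2 x" by (rule limI)
  qed
  then show ?thesis by (rule borel_measurable_AE[OF m])
qed

lemma key_ineq:
 fixes r a g s t S K p q :: real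
 assumes r: "r > 0" and a: "0 \<le> a" "a \<le> g" and s: "\<bar>s\<bar> \<le> S" and t: "\<bar>t\<bar> \<le> K"
 shows "2 * (r+1) * (s * a * p * q) + r * (r+1) * (a * q^2) + t * a * p^2 \<ge> - (((r+1) * S^2/r + K) * (p^2 * g))"
proof -
 have sq: "r * (r+1) * (q + s * p / r)^2 = r * (r+1) * q^2 + 2 * (r+1) * s * p * q + (r+1) * s^2 * p^2 / r"
  using r by (simp add: power2_eq_square field_simps)
 have "0 \<le> r * (r+1) * (q + s * p/r)^2" using r by simp
 then have b1: "2 * (r+1) * s * p * q + r * (r+1) * q^2 \<ge> - ((r+1) * s^2/r * p^2)" using sq by (simp add: algebra_simps)
 have "\<bar>s\<bar>^2 \<le> S^2" using s by (intro power_mono) auto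
 then have "s^2 \<le> S^2" by simp
 then have b2: "(r+1) * s^2/r * p^2 \<le> (r+1) * S^2/r * p^2" using r by (intro mult_right_mono divide_right_mono mult_left_mono) auto
 have "-K \<le> t" using t by linarith
 then have "-K * p^2 \<le> t * p^2" by (intro mult_right_mono) auto
 then have b3: "t * p^2 \<ge> -(K * p^2)" by simp
 define N where "N = (r+1) * S^2/r + K"
 have B: "2 * (r+1) * s * p * q + r * (r+1) * q^2 + t * p^2 \<ge> -(N * p^2)" unfolding N_def using b1 b2 b3 by (simp add: algebra_simps)
 have N0: "N \<ge> 0" unfolding N_def using r t by (auto intro!: add_nonneg_nonneg)
 have "a * (2 * (r+1) * s * p * q + r * (r+1) * q^2 + t * p^2) \<ge> a * (-(N * p^2))" using B a by (intro mult_left_mono) auto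
 moreover have "a * (N * p^2) \<le> g * (N * p^2)" using a N0 by (intro mult_right_mono) auto
 ultimately show ?thesis unfolding N_def[symmetric] by (simp add: algebra_simps)
qed

lemma zero_outside_deriv:
  fixes g :: "real \<Rightarrow> real"
  assumes "\<And>x. \<bar>x\<bar> > R \<Longrightarrow> g x = 0" "\<bar>x\<bar> > R"
  shows "deriv g x = 0"
proof -
  have e: "{y::real. \<bar>y\<bar> > R} = {..< -R} \<union> {R<..}" by auto
  have "open {y::real. \<bar>y\<bar> > R}" unfolding e by (intro open_Un open_lessThan open_greaterThan)
  then have "eventually (\<lambda>y. \<bar>y\<bar> > R) (nhds x)" using assms(2) eventually_nhds by blast
  then have "eventually (\<lambda>y. g y = (\<lambda>_. 0) y) (nhds x)"
    by (rule eventually_mono) (simp add: assms(1))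
  then have "deriv g x = deriv (\<lambda>_. 0::real) x" by (rule deriv_cong_ev) simp
  then show ?thesis by simp
qed

lemma bounded_cs:
  fixes g :: "real \<Rightarrow> real"
  assumes "continuous_on UNIV g" "\<And>x. \<bar>x\<bar> > R \<Longrightarrow> g x = 0"
  obtains B where "B \<ge> 0" "\<And>x. \<bar>g x\<bar> \<le> B"
proof -
  have "continuous_on (cball 0 R) g" using assms(1) continuous_on_subset by blast
  then obtain B where B: "B \<ge> 0" "\<And>x. x \<in> cball 0 R \<Longrightarrow> norm (g x) \<le> B"
    using continuous_on_compact_bound[of "cball 0 R" g] compact_cball by metis
  have "\<bar>g x\<bar> \<le> B" for x
  proof (cases "\<bar>x\<bar> > R")
    case True then show ?thesis using assms(2) B by simp
  next
    case False then have "x \<in> cball 0 R" by (simp add: dist_real_def)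
    then show ?thesis using B(2)[of x] by simp
  qed
  then show ?thesis using that B by blast
qed

lemma prod4_bound:
  fixes x1 x2 x3 x4 y1 y2 y3 y4 :: real
  assumes "\<bar>x1\<bar> \<le> y1" "0 \<le> x2" "x2 \<le> y2" "\<bar>x3\<bar> \<le> y3" "\<bar>x4\<bar> \<le> y4"
  shows "\<bar>x1 * x2 * x3 * x4\<bar> \<le> y1 * y2 * y3 * y4"
proof -
  have "\<bar>x1 * x2 * x3 * x4\<bar> = \<bar>x1\<bar> * x2 * \<bar>x3\<bar> * \<bar>x4\<bar>" using assms(2) by (simp add: abs_mult)
  also have "\<dots> \<le> y1 * y2 * y3 * y4"
    using assms by (intro mult_mono) (auto intro: order_trans[OF abs_ge_zero])
  finally show ?thesis .
qed

lemma int_bound: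
  fixes g f :: "'a \<Rightarrow> real"
  assumes "integrable M f" "g \<in> borel_measurable M" "AE x in M. \<bar>g x\<bar> \<le> K * f x"
  shows "integrable M g"
proof (rule Bochner_Integration.integrable_bound[OF integrable_mult_right[OF assms(1), of K] assms(2)])
  show "AE x in M. norm (g x) \<le> norm (K * f x)" using assms(3) by eventually_elim auto
qed

theorem proposition2p4:
  fixes r L c C :: real and V V' rho1 rho2 :: "real \<Rightarrow> real"
  assumes "r > 1"
    and "convex_on UNIV V"
    and "L-lipschitz_on UNIV V"
    and "\<And>x. (V has_real_derivative V' x) (at x)"
    and "L-lipschitz_on UNIV V'"
    and "(\<integral>\<^sup>+x. ennreal (exp (- V x)) \<partial>lebesgue) = 1"
    and "\<And>x. ((\<lambda>y. exp (- (r + 1) * V y)) has_real_derivative rho1 x) (at x)"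
    and "AE x in lebesgue. (rho1 has_real_derivative rho2 x) (at x)"
    and "0 < c" and "c < C"
  shows "\<exists>lam\<ge>0. \<forall>f \<in> P_cC c C (\<lambda>x. exp (- V x)). \<forall>\<phi>. test_fun \<phi> \<longrightarrow>
     2 * (r + 1) * (\<integral>x. rho1 x / f x powr r * deriv \<phi> x * deriv (deriv \<phi>) x \<partial>lebesgue)
     + r * (r + 1) * (\<integral>x. exp (- (r + 1) * V x) / f x powr r * (deriv (deriv \<phi>) x)\<^sup>2 \<partial>lebesgue)
     + (\<integral>x. rho2 x / f x powr r * (deriv \<phi> x)\<^sup>2 \<partial>lebesgue)
     \<ge> - lam * (\<integral>x. (deriv \<phi> x)\<^sup>2 * f x \<partial>lebesgue)"
proof -
  have r: "r > 1" using assms(1) .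
  have L0: "L \<ge> 0" using assms(3) lipschitz_on_nonneg by blast
  define E where "E x = exp (- (r + 1) * V x)" for x
  define K where "K = (r+1)*(L + (r+1)*L^2)"
  define S where "S = (r+1)*L"
  define cp where "cp = c powr (r+1)"
  define lam where "lam = ((r+1)*S^2/r + K) / cp"
  have cp0: "cp > 0" unfolding cp_def using assms(9) by simp
  have K0: "K \<ge> 0" unfolding K_def using r L0 by simp
  have S0: "S \<ge> 0" unfolding S_def using r L0 by simp
  have lam0: "lam \<ge> 0" unfolding lam_def using r K0 cp0 by simp
  have Epos: "E x > 0" for x unfolding E_def by simp
  have contV: "continuous_on UNIV V"
    by (metis DERIV_isCont assms(4) continuous_at_imp_continuous_on)
  have contV': "continuous_on UNIV V'" using assms(5) lipschitz_on_continuous_on by blast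
  have r1: "rho1 x = -(r+1) * V' x * E x" for x unfolding E_def using rho1_eq[OF assms(4) assms(7)] .
  have rho1_fun: "rho1 = (\<lambda>x. -(r+1) * V' x * exp (- (r + 1) * V x))" using r1 unfolding E_def by auto
  have cont1: "continuous_on UNIV rho1" unfolding rho1_fun by (intro continuous_intros contV contV')
  have rho1b: "\<bar>rho1 x\<bar> \<le> S * E x" for x
  proof -
    have "\<bar>V' x\<bar> \<le> L" using lip_deriv_bound[OF assms(3) assms(4)] .
    then have "(r+1) * \<bar>V' x\<bar> * E x \<le> (r+1) * L * E x" using r Epos[of x] by (intro mult_right_mono mult_left_mono) auto
    moreover have "\<bar>rho1 x\<bar> = (r+1) * \<bar>V' x\<bar> * E x" unfolding r1 using r Epos[of x] by (simp add: abs_mult)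
    ultimately show ?thesis unfolding S_def by simp
  qed
  have rho2b: "AE x in lebesgue. \<bar>rho2 x\<bar> \<le> K * E x"
    using assms(8) by eventually_elim (use rho2_bound[OF r assms(3) assms(4) assms(5) assms(7)] in \<open>auto simp: K_def E_def\<close>)
  have m2: "rho2 \<in> borel_measurable lebesgue" by (rule deriv_meas[OF cont1 assms(8)])
  have m1: "rho1 \<in> borel_measurable lebesgue" by (rule cont_meas[OF cont1])
  have mE: "E \<in> borel_measurable lebesgue" unfolding E_def by (intro cont_meas continuous_intros contV)
  show ?thesis
  proof (intro exI[of _ lam] conjI ballI allI impI)
    show "lam \<ge> 0" by (rule lam0)
    fix f \<phi> assume f: "f \<in> P_cC c C (\<lambda>x. exp (- V x))" and \<phi>: "test_fun \<phi>"
    have fm: "f \<in> borel_measurable lebesgue" and fint: "(\<integral>\<^sup>+x. ennreal (f x) \<partial>lebesgue) = 1"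
      and fae: "AE x in lebesgue. c * exp (- V x) \<le> f x \<and> f x \<le> C * exp (- V x)"
      using f unfolding P_cC_def by auto
    have fpos: "AE x in lebesgue. f x > 0"
      using fae by eventually_elim (use assms(9) in \<open>auto intro: less_le_trans[rotated]\<close>)
    have f0: "AE x in lebesgue. 0 \<le> f x" using fpos by eventually_elim simp
    have fI: "integrable lebesgue f"
      by (rule integrableI_nonneg[OF fm f0]) (simp add: fint)
    obtain R where zero: "\<And>x. \<bar>x\<bar> > R \<Longrightarrow> \<phi> x = 0"
      using \<phi> unfolding test_fun_def by auto
    have dif: "\<And>n x. ((deriv ^^ n) \<phi>) differentiable (at x)" using \<phi> unfolding test_fun_def by auto
    have cp1: "continuous_on UNIV (deriv \<phi>)"
      using dif[of 1] by (intro continuous_at_imp_continuous_on ballI differentiable_imp_continuous_within) simp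
    have cq1: "continuous_on UNIV (deriv (deriv \<phi>))"
      using dif[of 2] by (intro continuous_at_imp_continuous_on ballI differentiable_imp_continuous_within) (simp add: numeral_2_eq_2)
    have zp: "\<And>x. \<bar>x\<bar> > R \<Longrightarrow> deriv \<phi> x = 0" using zero_outside_deriv[of R \<phi>] zero by blast
    have zq: "\<And>x. \<bar>x\<bar> > R \<Longrightarrow> deriv (deriv \<phi>) x = 0" using zero_outside_deriv[of R "deriv \<phi>"] zp by blast
    obtain B1 where B1: "B1 \<ge> 0" "\<And>x. \<bar>deriv \<phi> x\<bar> \<le> B1" using bounded_cs[OF cp1 zp] by blast
    obtain B2 where B2: "B2 \<ge> 0" "\<And>x. \<bar>deriv (deriv \<phi>) x\<bar> \<le> B2" using bounded_cs[OF cq1 zq] by blast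
    define a where "a x = E x / f x powr r" for x
    define g where "g x = f x / cp" for x
    have ab: "AE x in lebesgue. 0 \<le> a x \<and> a x \<le> g x \<and> f x > 0"
      using fae fpos
    proof eventually_elim
      case (elim x)
      then have fx: "f x > 0" and cf: "c * exp (- V x) \<le> f x" by auto
      have Fpos: "f x powr r > 0" using fx by simp
      have "E x * cp = (c * exp (- V x)) powr (r+1)"
        unfolding E_def cp_def using assms(9) by (simp add: powr_mult exp_powr_real mult_ac) (simp add: algebra_simps)
      also have "\<dots> \<le> f x powr (r+1)" using cf assms(9) r by (intro powr_mono2) auto
      also have "\<dots> = f x * f x powr r" using fx by (simp add: powr_add)
      finally have "E x * cp \<le> f x * f x powr r" .
      then have "a x \<le> g x" unfolding a_def g_def using Fpos cp0 by (simp add: field_simps)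
      moreover have "0 \<le> a x" unfolding a_def using Epos[of x] Fpos by simp
      ultimately show ?case using fx by simp
    qed
    define p where "p x = deriv \<phi> x" for x
    define q where "q x = deriv (deriv \<phi>) x" for x
    define T1 where "T1 x = rho1 x / f x powr r * deriv \<phi> x * deriv (deriv \<phi>) x" for x
    define T2 where "T2 x = exp (- (r + 1) * V x) / f x powr r * (deriv (deriv \<phi>) x)\<^sup>2" for x
    define T3 where "T3 x = rho2 x / f x powr r * (deriv \<phi> x)\<^sup>2" for x
    define G where "G x = (deriv \<phi> x)\<^sup>2 * f x" for x
    have mp: "deriv \<phi> \<in> borel_measurable lebesgue" by (rule cont_meas[OF cp1])
    have mq: "deriv (deriv \<phi>) \<in> borel_measurable lebesgue" by (rule cont_meas[OF cq1])
    note [measurable] = m1 m2 mE fm mp mq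
    have mT1: "T1 \<in> borel_measurable lebesgue" unfolding T1_def by measurable
    have mT2: "T2 \<in> borel_measurable lebesgue" unfolding T2_def E_def[symmetric] by measurable
    have mT3: "T3 \<in> borel_measurable lebesgue" unfolding T3_def by measurable
    have mG: "G \<in> borel_measurable lebesgue" unfolding G_def by measurable
    have eqs: "f x > 0 \<Longrightarrow> T1 x = (rho1 x / E x) * a x * p x * q x \<and> T2 x = a x * (q x)^2
        \<and> T3 x = (rho2 x / E x) * a x * (p x)^2" for x
      unfolding T1_def T2_def T3_def a_def p_def q_def E_def[symmetric] using Epos[of x]
      by (simp add: field_simps)
    have sb: "\<bar>rho1 x / E x\<bar> \<le> S" for x using rho1b[of x] Epos[of x] by (simp add: abs_div divide_le_eq)
    have tb: "AE x in lebesgue. \<bar>rho2 x / E x\<bar> \<le> K"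
    proof -
      have "\<bar>rho2 x\<bar> \<le> K * E x \<Longrightarrow> \<bar>rho2 x / E x\<bar> \<le> K" for x
        using Epos[of x] by (simp add: abs_div divide_le_eq)
      then show ?thesis using rho2b by (auto elim: eventually_mono)
    qed
    have iT1: "integrable lebesgue T1"
    proof (rule int_bound[OF fI mT1, of "S * B1 * B2 / cp"])
      show "AE x in lebesgue. \<bar>T1 x\<bar> \<le> S * B1 * B2 / cp * f x"
        using ab
      proof eventually_elim
        case (elim x)
        have "\<bar>(rho1 x / E x) * a x * p x * q x\<bar> \<le> S * g x * B1 * B2"
          using elim sb B1 B2 unfolding p_def q_def by (intro prod4_bound) auto
        then show ?case using eqs[of x] elim unfolding g_def by (simp add: field_simps)
      qed
    qed
    have iT2: "integrable lebesgue T2"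
    proof (rule int_bound[OF fI mT2, of "B2 * B2 / cp"])
      show "AE x in lebesgue. \<bar>T2 x\<bar> \<le> B2 * B2 / cp * f x"
        using ab
      proof eventually_elim
        case (elim x)
        have "\<bar>1 * a x * q x * q x\<bar> \<le> 1 * g x * B2 * B2"
          using elim B1 B2 unfolding p_def q_def by (intro prod4_bound) auto
        then show ?case using eqs[of x] elim unfolding g_def by (simp add: field_simps power2_eq_square)
      qed
    qed
    have iT3: "integrable lebesgue T3"
    proof (rule int_bound[OF fI mT3, of "K * B1 * B1 / cp"])
      show "AE x in lebesgue. \<bar>T3 x\<bar> \<le> K * B1 * B1 / cp * f x"
        using ab tb
      proof eventually_elim
        case (elim x)
        have "\<bar>(rho2 x / E x) * a x * p x * p x\<bar> \<le> K * g x * B1 * B1"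
          using elim B1 B2 unfolding p_def q_def by (intro prod4_bound) auto
        then show ?case using eqs[of x] elim unfolding g_def by (simp add: field_simps power2_eq_square)
      qed
    qed
    have iG: "integrable lebesgue G"
    proof (rule int_bound[OF fI mG, of "B1 * B1"])
      show "AE x in lebesgue. \<bar>G x\<bar> \<le> B1 * B1 * f x"
        using ab
      proof eventually_elim
        case (elim x)
        have "\<bar>1 * 1 * p x * p x\<bar> \<le> 1 * 1 * B1 * B1"
          using elim B1 unfolding p_def by (intro prod4_bound) auto
        then show ?case using elim unfolding G_def p_def by (simp add: abs_mult power2_eq_square mult_right_mono)
      qed
    qed
    have pw: "AE x in lebesgue. - lam * G x \<le> 2 * (r + 1) * T1 x + r * (r + 1) * T2 x + T3 x"
      using ab tb
    proof eventually_elim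
      case (elim x)
      have "2*(r+1)*((rho1 x / E x)*a x*p x*q x) + r*(r+1)*(a x*(q x)^2) + (rho2 x / E x)*a x*(p x)^2
          \<ge> - (((r+1)*S^2/r + K) * ((p x)^2 * g x))"
        using elim sb r by (intro key_ineq) auto
      then show ?case using eqs[of x] elim cp0 unfolding lam_def G_def g_def p_def
        by (simp add: field_simps)
    qed
    have "(\<integral>x. - lam * G x \<partial>lebesgue) \<le> (\<integral>x. 2 * (r + 1) * T1 x + r * (r + 1) * T2 x + T3 x \<partial>lebesgue)"
      using iT1 iT2 iT3 iG pw by (intro integral_mono_AE) auto
    then have "- lam * integral\<^sup>L lebesgue G \<le> 2 * (r + 1) * integral\<^sup>L lebesgue T1 + r * (r + 1) * integral\<^sup>L lebesgue T2 + integral\<^sup>L lebesgue T3"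
      using iT1 iT2 iT3 by simp
    then show "2 * (r + 1) * (\<integral>x. rho1 x / f x powr r * deriv \<phi> x * deriv (deriv \<phi>) x \<partial>lebesgue)
     + r * (r + 1) * (\<integral>x. exp (- (r + 1) * V x) / f x powr r * (deriv (deriv \<phi>) x)\<^sup>2 \<partial>lebesgue)
     + (\<integral>x. rho2 x / f x powr r * (deriv \<phi> x)\<^sup>2 \<partial>lebesgue)
     \<ge> - lam * (\<integral>x. (deriv \<phi> x)\<^sup>2 * f x \<partial>lebesgue)"
      unfolding T1_def[abs_def] T2_def[abs_def] T3_def[abs_def] G_def[abs_def] by simp
  qed
qed

end
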